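(* Let $G$ be a graph, $f,p\ge 1$ integers, $\beta\ge0$. The graph $H$ returned by Algorithm 1 (described in the context), when $A_S$ is a $\beta$-additive $f$-EFT (resp. $f$-VFT) sourcewise spanner with respect to the computed source set $S$, is a $(\beta+2)$-additive $f$-EFT (resp. $f$-VFT) spanner of $G$: for every set $F$ of at most $f$ edges (resp. vertices) and all $s,t\in V(G)$ (not in $F$ in the vertex case) connected in $G-F$, $d_{H-F}(s,t)\le d_{G-F}(s,t)+\beta+2$.
   Context: $d_X(u,v)$ is the shortest-path distance in $X$; $X-F$ removes the edges (resp. the vertices and their incident edges) in $F$. Algorithm 1 (input: graph $G$, integers $f,p\ge1$, and a value $\beta$). Initially every vertex is colored white and has $\mathrm{counter}(v)=f+1$; $S=\emptyset$, $E'=\emptyset$. For a vertex $u$, let $N_w(u)$ be the set of currently white neighbors of $u$ and $\delta_w(u)=|N_w(u)|$. While there exists $s\in V\setminus S$ with $\delta_w(s)\ge p$: add $s$ to $S$, color $s$ red, and for each $u\in N_w(s)$ decrement $\mathrm{counter}(u)$, add edge $(s,u)$ to $E'$, and if $\mathrm{counter}(u)=0$ color $u$ black. After the loop, add to $E'$ every edge $(u,v)\in E(G)$ such that $u$ is white. Let $A_S$ be a $\beta$-additive $f$-EFT (resp. $f$-VFT) sourcewise spanner of $G$ with respect to $S$, i.e. a subgraph such that for every set $F$ of at most $f$ edges (resp. vertices) and every $s\in S$, $v\in V(G)$, $d_{A_S-F}(s,v)\le d_{G-F}(s,v)+\beta$. Return $H=(V(G),E'\cup E(A_S))$. *)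

theory Defs
  imports Main "HOL-Library.Extended_Real"
begin

definition simple_graph :: "'a set \<Rightarrow> 'a set set \<Rightarrow> bool" where
  "simple_graph V E \<longleftrightarrow> finite V \<and> (\<forall>e\<in>E. \<exists>u v. e = {u, v} \<and> u \<in> V \<and> v \<in> V \<and> u \<noteq> v)"

definition walk :: "'a set \<Rightarrow> 'a set set \<Rightarrow> 'a list \<Rightarrow> bool" where
  "walk V E w \<longleftrightarrow> w \<noteq> [] \<and> set w \<subseteq> V \<and> (\<forall>i. Suc i < length w \<longrightarrow> {w ! i, w ! Suc i} \<in> E)"

text \<open>Shortest-path distance; infinite if no path (in particular if an endpoint is not a vertex).\<close>
definition dist :: "'a set \<Rightarrow> 'a set set \<Rightarrow> 'a \<Rightarrow> 'a \<Rightarrow> enat" where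
  "dist V E u v = (INF w \<in> {w. walk V E w \<and> hd w = u \<and> last w = v}. enat (length w - 1))"

definition del_edges :: "'a set set \<Rightarrow> 'a set set \<Rightarrow> 'a set set" where
  "del_edges E F = E - F"

definition del_verts_V :: "'a set \<Rightarrow> 'a set \<Rightarrow> 'a set" where
  "del_verts_V V F = V - F"

definition del_verts_E :: "'a set set \<Rightarrow> 'a set \<Rightarrow> 'a set set" where
  "del_verts_E E F = {e \<in> E. e \<inter> F = {}}"

definition Nw :: "'a set set \<Rightarrow> 'a set \<Rightarrow> 'a \<Rightarrow> 'a set" where
  "Nw E W u = {v \<in> W. {u, v} \<in> E}"

text \<open>Reachable states (S, W = white vertices, counter, E') of the while loop of Algorithm 1.
  Red vertices are exactly those in S; black vertices are those neither white nor in S.\<close>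
inductive alg1_reach :: "'a set \<Rightarrow> 'a set set \<Rightarrow> nat \<Rightarrow> nat \<Rightarrow>
    'a set \<Rightarrow> 'a set \<Rightarrow> ('a \<Rightarrow> nat) \<Rightarrow> 'a set set \<Rightarrow> bool"
  for V E f p where
  init: "alg1_reach V E f p {} V (\<lambda>_. f + 1) {}"
| step: "\<lbrakk> alg1_reach V E f p S W c E'; s \<in> V - S; card (Nw E W s) \<ge> p;
          c' = (\<lambda>u. if u \<in> Nw E W s then c u - 1 else c u) \<rbrakk>
        \<Longrightarrow> alg1_reach V E f p (insert s S) ((W - {s}) - {u \<in> Nw E W s. c' u = 0}) c'
              (E' \<union> {{s, u} | u. u \<in> Nw E W s})"

text \<open>Possible outputs (S, E') of Algorithm 1 (any choice of s in the loop), where E'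
  includes all edges with a white endpoint added after the loop.\<close>
definition alg1_output :: "'a set \<Rightarrow> 'a set set \<Rightarrow> nat \<Rightarrow> nat \<Rightarrow> 'a set \<Rightarrow> 'a set set \<Rightarrow> bool" where
  "alg1_output V E f p S Eout \<longleftrightarrow>
     (\<exists>W c E'. alg1_reach V E f p S W c E' \<and> (\<forall>s \<in> V - S. card (Nw E W s) < p)
        \<and> Eout = E' \<union> {e \<in> E. e \<inter> W \<noteq> {}})"

definition EFT_sourcewise_spanner :: "'a set \<Rightarrow> 'a set set \<Rightarrow> 'a set set \<Rightarrow> 'a set \<Rightarrow> nat \<Rightarrow> real \<Rightarrow> bool" where
  "EFT_sourcewise_spanner V E A S f \<beta> \<longleftrightarrow> A \<subseteq> E \<and>
     (\<forall>F. F \<subseteq> E \<and> card F \<le> f \<longrightarrow> (\<forall>s\<in>S. \<forall>v\<in>V.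
        ereal_of_enat (dist V (del_edges A F) s v) \<le> ereal_of_enat (dist V (del_edges E F) s v) + ereal \<beta>))"

definition VFT_sourcewise_spanner :: "'a set \<Rightarrow> 'a set set \<Rightarrow> 'a set set \<Rightarrow> 'a set \<Rightarrow> nat \<Rightarrow> real \<Rightarrow> bool" where
  "VFT_sourcewise_spanner V E A S f \<beta> \<longleftrightarrow> A \<subseteq> E \<and>
     (\<forall>F. F \<subseteq> V \<and> card F \<le> f \<longrightarrow> (\<forall>s\<in>S. \<forall>v\<in>V.
        ereal_of_enat (dist (del_verts_V V F) (del_verts_E A F) s v)
          \<le> ereal_of_enat (dist (del_verts_V V F) (del_verts_E E F) s v) + ereal \<beta>))"

definition EFT_spanner :: "'a set \<Rightarrow> 'a set set \<Rightarrow> 'a set set \<Rightarrow> nat \<Rightarrow> real \<Rightarrow> bool" where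
  "EFT_spanner V E H f \<beta> \<longleftrightarrow> H \<subseteq> E \<and>
     (\<forall>F. F \<subseteq> E \<and> card F \<le> f \<longrightarrow> (\<forall>s\<in>V. \<forall>t\<in>V.
        dist V (del_edges E F) s t \<noteq> \<infinity> \<longrightarrow>
        ereal_of_enat (dist V (del_edges H F) s t) \<le> ereal_of_enat (dist V (del_edges E F) s t) + ereal \<beta>))"

definition VFT_spanner :: "'a set \<Rightarrow> 'a set set \<Rightarrow> 'a set set \<Rightarrow> nat \<Rightarrow> real \<Rightarrow> bool" where
  "VFT_spanner V E H f \<beta> \<longleftrightarrow> H \<subseteq> E \<and>
     (\<forall>F. F \<subseteq> V \<and> card F \<le> f \<longrightarrow> (\<forall>s\<in>V - F. \<forall>t\<in>V - F.
        dist (del_verts_V V F) (del_verts_E E F) s t \<noteq> \<infinity> \<longrightarrow>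
        ereal_of_enat (dist (del_verts_V V F) (del_verts_E H F) s t)
          \<le> ereal_of_enat (dist (del_verts_V V F) (del_verts_E E F) s t) + ereal \<beta>))"

end

theory Submission
  imports Defs
begin


lemma walk_single[simp]: "walk V E [x] \<longleftrightarrow> x \<in> V"
  by (auto simp: walk_def)

lemma walk_Cons2: "walk V E (x # y # ws) \<longleftrightarrow> x \<in> V \<and> {x, y} \<in> E \<and> walk V E (y # ws)"
proof
  assume w: "walk V E (x # y # ws)"
  have "\<forall>i. Suc i < length (y#ws) \<longrightarrow> {(y#ws) ! i, (y#ws) ! Suc i} \<in> E"
  proof (intro allI impI)
    fix i assume "Suc i < length (y#ws)"
    then have "Suc (Suc i) < length (x#y#ws)" by simp
    with w show "{(y#ws) ! i, (y#ws) ! Suc i} \<in> E" unfolding walk_def by (metis nth_Cons_Suc)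
  qed
  moreover have "{x,y} \<in> E" using w unfolding walk_def by (metis nth_Cons_0 nth_Cons_Suc length_Cons zero_less_Suc Suc_less_eq)
  ultimately show "x \<in> V \<and> {x, y} \<in> E \<and> walk V E (y # ws)" using w unfolding walk_def by auto
next
  assume a: "x \<in> V \<and> {x, y} \<in> E \<and> walk V E (y # ws)"
  have "\<forall>i. Suc i < length (x#y#ws) \<longrightarrow> {(x#y#ws) ! i, (x#y#ws) ! Suc i} \<in> E"
  proof (intro allI impI)
    fix i assume i: "Suc i < length (x#y#ws)"
    show "{(x#y#ws) ! i, (x#y#ws) ! Suc i} \<in> E"
    proof (cases i)
      case 0 then show ?thesis using a by simp
    next
      case (Suc j) then show ?thesis using a i unfolding walk_def by auto
    qed
  qed
  then show "walk V E (x # y # ws)" using a unfolding walk_def by auto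
qed

lemma walk_ConsD: "walk V E (x # ws) \<Longrightarrow> ws \<noteq> [] \<Longrightarrow> walk V E ws \<and> {x, hd ws} \<in> E \<and> x \<in> V"
  by (cases ws) (auto simp: walk_Cons2)

lemma walk_append: "walk V E w1 \<Longrightarrow> walk V E w2 \<Longrightarrow> last w1 = hd w2 \<Longrightarrow>
   walk V E (w1 @ tl w2) \<and> hd (w1 @ tl w2) = hd w1 \<and> last (w1 @ tl w2) = last w2
   \<and> length (w1 @ tl w2) = length w1 + length w2 - 1"
proof (induction w1)
  case Nil then show ?case by (simp add: walk_def)
next
  case (Cons x w1)
  show ?case
  proof (cases w1)
    case Nil
    then show ?thesis using Cons.prems by (cases w2) (auto simp: walk_def)
  next
    case (Cons y ws)
    have wx: "walk V E w1" "{x,y} \<in> E" "x \<in> V" using Cons.prems(1) \<open>w1 = y # ws\<close> by (auto simp: walk_Cons2)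
    have ih: "walk V E (w1 @ tl w2) \<and> hd (w1 @ tl w2) = hd w1 \<and> last (w1 @ tl w2) = last w2
   \<and> length (w1 @ tl w2) = length w1 + length w2 - 1"
      using Cons.IH wx Cons.prems \<open>w1 = y # ws\<close> by auto
    have "walk V E (x # w1 @ tl w2)" using ih wx \<open>w1 = y # ws\<close> by (simp add: walk_Cons2)
    moreover have "w2 \<noteq> []" using Cons.prems(2) by (auto simp: walk_def)
    ultimately show ?thesis using ih \<open>w1 = y # ws\<close> by auto
  qed
qed

lemma walk_rev: "walk V E w \<Longrightarrow> walk V E (rev w)"
proof -
  assume w: "walk V E w"
  have "{rev w ! i, rev w ! Suc i} \<in> E" if i: "Suc i < length w" for i
  proof -
    have "rev w ! i = w ! (length w - 1 - i)" "rev w ! Suc i = w ! (length w - 1 - Suc i)"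
      using i by (auto simp: rev_nth)
    moreover have "Suc (length w - 1 - Suc i) = length w - 1 - i" "length w - 1 - i < length w" using i by auto
    ultimately show ?thesis using w unfolding walk_def by (metis insert_commute)
  qed
  then show ?thesis using w unfolding walk_def by auto
qed

lemma walk_mono: "walk V E1 w \<Longrightarrow> E1 \<subseteq> E2 \<Longrightarrow> walk V E2 w"
  unfolding walk_def by auto

lemma dist_le_walk: "walk V E w \<Longrightarrow> dist V E (hd w) (last w) \<le> enat (length w - 1)"
  unfolding dist_def by (rule INF_lower) auto

lemma dist_attained: assumes "dist V E u v \<noteq> \<infinity>"
  shows "\<exists>w. walk V E w \<and> hd w = u \<and> last w = v \<and> dist V E u v = enat (length w - 1)"
proof -
  let ?A = "{w. walk V E w \<and> hd w = u \<and> last w = v}"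
  have ne: "?A \<noteq> {}" using assms unfolding dist_def by (auto simp: top_enat_def[symmetric])
  have "Inf ((\<lambda>w. enat (length w - 1)) ` ?A) \<in> (\<lambda>w. enat (length w - 1)) ` ?A"
    unfolding Inf_enat_def using ne by (auto intro: LeastI)
  then show ?thesis unfolding dist_def by auto
qed

lemma dist_self: "v \<in> V \<Longrightarrow> dist V E v v = 0"
  using dist_le_walk[of V E "[v]"] by (simp add: zero_enat_def[symmetric])

lemma dist_edge: "{u, v} \<in> E \<Longrightarrow> u \<in> V \<Longrightarrow> v \<in> V \<Longrightarrow> dist V E u v \<le> 1"
  using dist_le_walk[of V E "[u,v]"] by (simp add: walk_Cons2 one_enat_def)

lemma dist_triangle: "dist V E u w \<le> dist V E u v + dist V E v w"
proof (cases "dist V E u v = \<infinity> \<or> dist V E v w = \<infinity>")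
  case True then show ?thesis by auto
next
  case False
  then obtain w1 w2 where w1: "walk V E w1" "hd w1 = u" "last w1 = v" "dist V E u v = enat (length w1 - 1)"
    and w2: "walk V E w2" "hd w2 = v" "last w2 = w" "dist V E v w = enat (length w2 - 1)"
    using dist_attained by metis
  have "w1 \<noteq> []" "w2 \<noteq> []" using w1 w2 by (auto simp: walk_def)
  from walk_append[OF w1(1) w2(1)] w1 w2 have
    "dist V E u w \<le> enat (length w1 + length w2 - 1 - 1)"
    using dist_le_walk[of V E "w1 @ tl w2"] by auto
  then show ?thesis using w1 w2 \<open>w1 \<noteq> []\<close> \<open>w2 \<noteq> []\<close> by (cases w1; cases w2) auto
qed

lemma dist_sym_le: "dist V E u v \<le> dist V E v u"
proof (cases "dist V E v u = \<infinity>")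
  case True then show ?thesis by auto
next
  case False
  then obtain w where w: "walk V E w" "hd w = v" "last w = u" "dist V E v u = enat (length w - 1)"
    using dist_attained by metis
  have "w \<noteq> []" using w by (auto simp: walk_def)
  then show ?thesis using dist_le_walk[OF walk_rev[OF w(1)]] w by (simp add: hd_rev last_rev)
qed

lemma dist_sym: "dist V E u v = dist V E v u"
  using dist_sym_le by (metis order_antisym)

lemma dist_mono: "E1 \<subseteq> E2 \<Longrightarrow> dist V E2 u v \<le> dist V E1 u v"
  unfolding dist_def by (rule INF_superset_mono) (auto intro: walk_mono)


lemma walk_cover:
  assumes "walk V0 E0 w"
    and cover: "\<And>x y. {x,y} \<in> E0 \<Longrightarrow> {x,y} \<notin> H0 \<Longrightarrow> x \<in> V0 \<Longrightarrow> P x"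
  shows "dist V0 H0 (hd w) (last w) \<le> enat (length w - 1) \<or>
    (\<exists>y. P y \<and> y \<in> V0 \<and> dist V0 E0 y (last w) + dist V0 H0 (hd w) y \<le> enat (length w - 1))"
  using assms(1)
proof (induction w)
  case Nil then show ?case by (simp add: walk_def)
next
  case (Cons x w)
  show ?case
  proof (cases "w = []")
    case True then show ?thesis using Cons.prems by (simp add: dist_self)
  next
    case False
    from walk_ConsD[OF Cons.prems False] have ww: "walk V0 E0 w" "{x, hd w} \<in> E0" "x \<in> V0" by auto
    have hv: "hd w \<in> V0" using ww(1) False by (cases w) (auto simp: walk_def)
    have L: "length (x#w) - 1 = Suc (length w - 1)" using False by (cases w) auto
    show ?thesis
    proof (cases "{x, hd w} \<in> H0")
      case True
      have e1: "dist V0 H0 x (hd w) \<le> 1" using dist_edge[OF True ww(3) hv] .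
      from Cons.IH[OF ww(1)] show ?thesis
      proof
        assume a: "dist V0 H0 (hd w) (last w) \<le> enat (length w - 1)"
        have "dist V0 H0 x (last w) \<le> dist V0 H0 x (hd w) + dist V0 H0 (hd w) (last w)" by (rule dist_triangle)
        also have "\<dots> \<le> 1 + enat (length w - 1)" using e1 a by (rule add_mono)
        also have "1 + enat (length w - 1) = enat (length (x#w) - 1)" using L by (simp add: one_enat_def)
        finally show ?thesis using False by simp
      next
        assume "\<exists>y. P y \<and> y \<in> V0 \<and> dist V0 E0 y (last w) + dist V0 H0 (hd w) y \<le> enat (length w - 1)"
        then obtain y where y: "P y" "y \<in> V0" "dist V0 E0 y (last w) + dist V0 H0 (hd w) y \<le> enat (length w - 1)" by blast
        have "dist V0 E0 y (last w) + dist V0 H0 x y \<le> dist V0 E0 y (last w) + (dist V0 H0 x (hd w) + dist V0 H0 (hd w) y)"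
          by (intro add_left_mono dist_triangle)
        also have "\<dots> \<le> 1 + (dist V0 E0 y (last w) + dist V0 H0 (hd w) y)"
          using e1 by (simp add: ac_simps add_right_mono)
        also have "\<dots> \<le> 1 + enat (length w - 1)" using y(3) by (rule add_left_mono)
        finally show ?thesis using L False y by (auto simp: one_enat_def)
      qed
    next
      case False2: False
      have "P x" using cover[OF ww(2) False2 ww(3)] .
      moreover have "dist V0 E0 x (last w) \<le> enat (length (x#w) - 1)"
        using dist_le_walk[OF Cons.prems] False by simp
      ultimately show ?thesis using ww(3) False by (auto simp: dist_self)
    qed
  qed
qed


lemma arith_final:
  fixes X Y D1 D2 d Dst :: enat and \<beta> :: real
  assumes "ereal_of_enat X \<le> ereal_of_enat Y + ereal \<beta>"
    and "Dst \<le> X + 1 + D1" and "Y \<le> 1 + D2" and "D2 + D1 \<le> d" and "d \<noteq> \<infinity>"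
  shows "ereal_of_enat Dst \<le> ereal_of_enat d + ereal (\<beta> + 2)"
proof (cases d)
  case (enat n)
  show ?thesis
  proof (cases D1)
    case (enat a)
    show ?thesis
    proof (cases D2)
      case (enat b)
      show ?thesis
      proof (cases Y)
        case (enat y)
        show ?thesis
        proof (cases X)
          case (enat x)
          show ?thesis
          proof (cases Dst)
            case (enat z)
            from assms have "real x \<le> real y + \<beta>" "z \<le> x + 1 + a" "y \<le> 1 + b" "b + a \<le> n"
              using \<open>d = enat n\<close> \<open>D1 = enat a\<close> \<open>D2 = enat b\<close> \<open>Y = enat y\<close> \<open>X = enat x\<close> \<open>Dst = enat z\<close>
              by (simp_all add: one_enat_def)
            then show ?thesis
              using \<open>d = enat n\<close> \<open>Dst = enat z\<close> by simp
          next
            case infinity then show ?thesis using assms(2) \<open>X = enat x\<close> \<open>D1 = enat a\<close> by (simp add: one_enat_def)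
          qed
        next
          case infinity then show ?thesis using assms(1) \<open>Y = enat y\<close> by simp
        qed
      next
        case infinity then show ?thesis using assms(3) \<open>D2 = enat b\<close> by (simp add: one_enat_def)
      qed
    next
      case infinity then show ?thesis using assms(4) \<open>d = enat n\<close> by simp
    qed
  next
    case infinity then show ?thesis using assms(4) \<open>d = enat n\<close> by simp
  qed
next
  case infinity then show ?thesis using assms(5) by simp
qed

lemma main_abstract:
  fixes \<beta> :: real
  assumes cover: "\<And>x y. {x,y} \<in> E0 \<Longrightarrow> {x,y} \<notin> H0 \<Longrightarrow> x \<in> V0 \<Longrightarrow>
        \<exists>\<sigma>\<in>V0. Src \<sigma> \<and> (\<sigma> = x \<or> ({\<sigma>, x} \<in> H0 \<and> {\<sigma>, x} \<in> E0))"
    and src: "\<And>\<sigma> v. Src \<sigma> \<Longrightarrow> \<sigma> \<in> V0 \<Longrightarrow> v \<in> V0 \<Longrightarrow>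
        ereal_of_enat (dist V0 H0 \<sigma> v) \<le> ereal_of_enat (dist V0 E0 \<sigma> v) + ereal \<beta>"
    and st: "s \<in> V0" "t \<in> V0" and fin: "dist V0 E0 s t \<noteq> \<infinity>" and b0: "\<beta> \<ge> 0"
  shows "ereal_of_enat (dist V0 H0 s t) \<le> ereal_of_enat (dist V0 E0 s t) + ereal (\<beta> + 2)"
proof -
  have fin': "dist V0 E0 t s \<noteq> \<infinity>" using fin by (simp add: dist_sym)
  obtain w where w: "walk V0 E0 w" "hd w = t" "last w = s" "dist V0 E0 t s = enat (length w - 1)"
    using dist_attained[OF fin'] by metis
  let ?P = "\<lambda>x. \<exists>\<sigma>\<in>V0. Src \<sigma> \<and> (\<sigma> = x \<or> ({\<sigma>, x} \<in> H0 \<and> {\<sigma>, x} \<in> E0))"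
  have d: "dist V0 E0 s t = enat (length w - 1)" using w(4) by (simp add: dist_sym)
  have wc: "dist V0 H0 (hd w) (last w) \<le> enat (length w - 1) \<or>
    (\<exists>y. ?P y \<and> y \<in> V0 \<and> dist V0 E0 y (last w) + dist V0 H0 (hd w) y \<le> enat (length w - 1))"
    by (rule walk_cover[OF w(1)]) (rule cover)
  from wc show ?thesis
  proof (elim disjE exE conjE)
    assume "dist V0 H0 (hd w) (last w) \<le> enat (length w - 1)"
    then have "dist V0 H0 s t \<le> dist V0 E0 s t" using w d by (simp add: dist_sym)
    then have "ereal_of_enat (dist V0 H0 s t) \<le> ereal_of_enat (dist V0 E0 s t) + 0" by simp
    also have "\<dots> \<le> ereal_of_enat (dist V0 E0 s t) + ereal (\<beta> + 2)"
      by (rule add_left_mono) (use b0 in simp)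
    finally show ?thesis .
  next
    fix y assume Py: "?P y" and yV: "y \<in> V0"
      and yd: "dist V0 E0 y (last w) + dist V0 H0 (hd w) y \<le> enat (length w - 1)"
    from Py obtain \<sigma> where sg: "\<sigma> \<in> V0" "Src \<sigma>" "\<sigma> = y \<or> ({\<sigma>, y} \<in> H0 \<and> {\<sigma>, y} \<in> E0)" by blast
    have hs1: "dist V0 H0 \<sigma> y \<le> 1" and es1: "dist V0 E0 \<sigma> y \<le> 1"
      using sg yV by (auto simp: dist_self intro: dist_edge)
    have A: "ereal_of_enat (dist V0 H0 \<sigma> s) \<le> ereal_of_enat (dist V0 E0 \<sigma> s) + ereal \<beta>"
      using src[OF sg(2,1) st(1)] .
    have B: "dist V0 H0 s t \<le> dist V0 H0 \<sigma> s + 1 + dist V0 H0 y t"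
    proof -
      have "dist V0 H0 s t \<le> dist V0 H0 s \<sigma> + dist V0 H0 \<sigma> t" by (rule dist_triangle)
      also have "\<dots> \<le> dist V0 H0 s \<sigma> + (dist V0 H0 \<sigma> y + dist V0 H0 y t)"
        by (intro add_left_mono dist_triangle)
      also have "\<dots> \<le> dist V0 H0 s \<sigma> + (1 + dist V0 H0 y t)"
        using hs1 by (intro add_left_mono add_right_mono)
      finally show ?thesis by (simp add: dist_sym[of V0 H0 s] ac_simps)
    qed
    have C: "dist V0 E0 \<sigma> s \<le> 1 + dist V0 E0 y s"
    proof -
      have "dist V0 E0 \<sigma> s \<le> dist V0 E0 \<sigma> y + dist V0 E0 y s" by (rule dist_triangle)
      also have "\<dots> \<le> 1 + dist V0 E0 y s" using es1 by (rule add_right_mono)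
      finally show ?thesis .
    qed
    have D: "dist V0 E0 y s + dist V0 H0 y t \<le> dist V0 E0 s t"
      using yd w d by (simp add: dist_sym[of V0 H0 t y])
    show ?thesis by (rule arith_final[OF A B C D fin])
  qed
qed



definition Kset :: "'a set \<Rightarrow> 'a set set \<Rightarrow> 'a \<Rightarrow> 'a set" where
  "Kset S E' u = {s \<in> S. {s, u} \<in> E'}"

lemma alg1_inv:
  assumes "alg1_reach V E f p S W c E'" and fin: "finite V"
  shows "S \<subseteq> V \<and> W \<subseteq> V \<and> E' \<subseteq> E \<and>
    (\<forall>u\<in>V. (u \<in> W \<longrightarrow> f + 1 - c u \<le> card (Kset S E' u)) \<and>
            (u \<notin> W \<longrightarrow> u \<in> S \<or> f + 1 \<le> card (Kset S E' u)))"
  using assms(1)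
proof (induction rule: alg1_reach.induct)
  case init then show ?case by (auto simp: Kset_def)
next
  case (step S W c E' s c')
  let ?N = "Nw E W s"
  let ?S' = "insert s S" and ?W' = "(W - {s}) - {u \<in> ?N. c' u = 0}"
    and ?E'' = "E' \<union> {{s, u} | u. u \<in> ?N}"
  have IH: "S \<subseteq> V" "W \<subseteq> V" "E' \<subseteq> E"
    "\<And>u. u \<in> V \<Longrightarrow> u \<in> W \<Longrightarrow> f + 1 - c u \<le> card (Kset S E' u)"
    "\<And>u. u \<in> V \<Longrightarrow> u \<notin> W \<Longrightarrow> u \<in> S \<or> f + 1 \<le> card (Kset S E' u)"
    using step.IH by auto
  have sS: "s \<notin> S" "s \<in> V" using step.hyps(2) by auto
  have finS': "finite ?S'" using IH(1) sS(2) fin finite_subset by blast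
  have finK: "finite (Kset ?S' ?E'' u)" for u
    by (rule finite_subset[OF _ finS']) (auto simp: Kset_def)
  have mono: "card (Kset S E' u) \<le> card (Kset ?S' ?E'' u)" for u
    by (rule card_mono[OF finK]) (auto simp: Kset_def)
  have new: "card (Kset S E' u) + 1 \<le> card (Kset ?S' ?E'' u)" if "u \<in> ?N" for u
  proof -
    have sub: "insert s (Kset S E' u) \<subseteq> Kset ?S' ?E'' u" using that by (auto simp: Kset_def)
    moreover have "finite (Kset S E' u)" by (rule finite_subset[OF _ finS']) (auto simp: Kset_def)
    moreover have "s \<notin> Kset S E' u" using sS(1) by (simp add: Kset_def)
    ultimately have "card (insert s (Kset S E' u)) = card (Kset S E' u) + 1" by simp
    with card_mono[OF finK sub] show ?thesis by simp
  qed
  have NE: "?N \<subseteq> W" "\<And>u. u \<in> ?N \<Longrightarrow> {s,u} \<in> E" by (auto simp: Nw_def)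
  have part4: "\<forall>u\<in>V. (u \<in> ?W' \<longrightarrow> f + 1 - c' u \<le> card (Kset ?S' ?E'' u)) \<and>
            (u \<notin> ?W' \<longrightarrow> u \<in> ?S' \<or> f + 1 \<le> card (Kset ?S' ?E'' u))"
  proof
    fix u assume uV: "u \<in> V"
    show "(u \<in> ?W' \<longrightarrow> f + 1 - c' u \<le> card (Kset ?S' ?E'' u)) \<and>
            (u \<notin> ?W' \<longrightarrow> u \<in> ?S' \<or> f + 1 \<le> card (Kset ?S' ?E'' u))"
    proof (cases "u \<in> ?N")
      case True
      have uW: "u \<in> W" using True NE by auto
      have c'u: "c' u = c u - 1" using True step.hyps(4) by simp
      have "f + 1 - c' u \<le> card (Kset S E' u) + 1" using IH(4)[OF uV uW] c'u by linarith
      then have b: "f + 1 - c' u \<le> card (Kset ?S' ?E'' u)" using new[OF True] by linarith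
      show ?thesis
      proof (intro conjI impI)
        assume "u \<in> ?W'" then show "f + 1 - c' u \<le> card (Kset ?S' ?E'' u)" using b by simp
      next
        assume "u \<notin> ?W'"
        then have "u = s \<or> c' u = 0" using uW True by auto
        then show "u \<in> ?S' \<or> f + 1 \<le> card (Kset ?S' ?E'' u)" using b by auto
      qed
    next
      case False
      have c'u: "c' u = c u" using False step.hyps(4) by simp
      show ?thesis
      proof (intro conjI impI)
        assume "u \<in> ?W'"
        then have "u \<in> W" by auto
        then show "f + 1 - c' u \<le> card (Kset ?S' ?E'' u)" using IH(4)[OF uV] mono[of u] c'u by linarith
      next
        assume "u \<notin> ?W'"
        then have "u = s \<or> u \<notin> W" using False by auto
        then show "u \<in> ?S' \<or> f + 1 \<le> card (Kset ?S' ?E'' u)"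
          using IH(5)[OF uV] mono[of u] by auto
      qed
    qed
  qed
  have "?E'' \<subseteq> E" using IH(3) NE(2) by auto
  moreover have "?S' \<subseteq> V" "?W' \<subseteq> V" using IH(1,2) sS(2) by auto
  ultimately show ?case using part4 by blast
qed



lemma pick_edge:
  assumes "finite F" "card F \<le> f" "f + 1 \<le> card K"
  shows "\<exists>\<sigma>\<in>K. {\<sigma>, x} \<notin> F"
proof (rule ccontr)
  assume "\<not> ?thesis"
  then have sub: "(\<lambda>\<sigma>. {\<sigma>, x}) ` K \<subseteq> F" by auto
  have inj: "inj_on (\<lambda>\<sigma>. {\<sigma>, x}) K" by (rule inj_onI) (auto simp: doubleton_eq_iff)
  have fK: "finite K" using assms(3) card.infinite by fastforce
  have "card K = card ((\<lambda>\<sigma>. {\<sigma>, x}) ` K)" using card_image[OF inj] by simp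
  also have "\<dots> \<le> card F" using card_mono[OF assms(1) sub] .
  finally show False using assms by linarith
qed

lemma pick_vert:
  assumes "finite F" "card F \<le> f" "f + 1 \<le> card K"
  shows "\<exists>\<sigma>\<in>K. \<sigma> \<notin> F"
proof (rule ccontr)
  assume "\<not> ?thesis"
  then have "K \<subseteq> F" by auto
  then have "card K \<le> card F" using card_mono[OF assms(1)] by blast
  then show False using assms by linarith
qed

theorem theorem2:
  fixes V :: "'a set" and E :: "'a set set" and f p :: nat and \<beta> :: real
    and S :: "'a set" and E' :: "'a set set"
  assumes "simple_graph V E" and "f \<ge> 1" and "p \<ge> 1" and "\<beta> \<ge> 0"
    and "alg1_output V E f p S E'"
  shows "(\<forall>A. EFT_sourcewise_spanner V E A S f \<beta> \<longrightarrow> EFT_spanner V E (E' \<union> A) f (\<beta> + 2))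
       \<and> (\<forall>A. VFT_sourcewise_spanner V E A S f \<beta> \<longrightarrow> VFT_spanner V E (E' \<union> A) f (\<beta> + 2))"
proof -
  have finV: "finite V" using assms(1) by (simp add: simple_graph_def)
  have EV: "E \<subseteq> Pow V" using assms(1) by (auto simp: simple_graph_def)
  have finE: "finite E" using finite_subset[OF EV] finV by auto
  obtain W c Er where R: "alg1_reach V E f p S W c Er"
    and Eo: "E' = Er \<union> {e \<in> E. e \<inter> W \<noteq> {}}"
    using assms(5) unfolding alg1_output_def by blast
  have I: "S \<subseteq> V" "W \<subseteq> V" "Er \<subseteq> E"
    "\<And>u. u \<in> V \<Longrightarrow> u \<notin> W \<Longrightarrow> u \<in> S \<or> f + 1 \<le> card (Kset S Er u)"
    using alg1_inv[OF R finV] by auto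
  have E'E: "E' \<subseteq> E" using Eo I(3) by auto
  have notW: "x \<notin> W" if "{x,y} \<in> E" "{x,y} \<notin> E'" for x y
    using that Eo by auto
  show ?thesis
  proof (intro conjI allI impI)
    fix A assume A: "EFT_sourcewise_spanner V E A S f \<beta>"
    have AE: "A \<subseteq> E" using A by (simp add: EFT_sourcewise_spanner_def)
    show "EFT_spanner V E (E' \<union> A) f (\<beta> + 2)"
      unfolding EFT_spanner_def
    proof (intro conjI allI impI ballI)
      show "E' \<union> A \<subseteq> E" using AE E'E by auto
    next
      fix F s t assume F: "F \<subseteq> E \<and> card F \<le> f" and st: "s \<in> V" "t \<in> V"
        and fin: "dist V (del_edges E F) s t \<noteq> \<infinity>"
      have finF: "finite F" using F finE finite_subset by auto
      show "ereal_of_enat (dist V (del_edges (E' \<union> A) F) s t)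
          \<le> ereal_of_enat (dist V (del_edges E F) s t) + ereal (\<beta> + 2)"
      proof (rule main_abstract[where Src = "\<lambda>\<sigma>. \<sigma> \<in> S", OF _ _ st fin assms(4)])
        fix x y assume xy: "{x, y} \<in> del_edges E F" "{x, y} \<notin> del_edges (E' \<union> A) F" "x \<in> V"
        have "x \<notin> W" using xy notW by (auto simp: del_edges_def)
        then have "x \<in> S \<or> f + 1 \<le> card (Kset S Er x)" using I(4) xy(3) by blast
        then show "\<exists>\<sigma>\<in>V. \<sigma> \<in> S \<and> (\<sigma> = x \<or> {\<sigma>, x} \<in> del_edges (E' \<union> A) F \<and> {\<sigma>, x} \<in> del_edges E F)"
        proof
          assume "x \<in> S" then show ?thesis using xy(3) by blast
        next
          assume "f + 1 \<le> card (Kset S Er x)"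
          then obtain \<sigma> where "\<sigma> \<in> Kset S Er x" "{\<sigma>, x} \<notin> F" using pick_edge[OF finF] F by blast
          then show ?thesis using I(1,3) Eo by (auto simp: Kset_def del_edges_def)
        qed
      next
        fix \<sigma> v assume "\<sigma> \<in> S" "\<sigma> \<in> V" "v \<in> V"
        have "dist V (del_edges (E' \<union> A) F) \<sigma> v \<le> dist V (del_edges A F) \<sigma> v"
          by (rule dist_mono) (auto simp: del_edges_def)
        then have "ereal_of_enat (dist V (del_edges (E' \<union> A) F) \<sigma> v) \<le> ereal_of_enat (dist V (del_edges A F) \<sigma> v)"
          by simp
        also have "\<dots> \<le> ereal_of_enat (dist V (del_edges E F) \<sigma> v) + ereal \<beta>"
          using A F \<open>\<sigma> \<in> S\<close> \<open>v \<in> V\<close> unfolding EFT_sourcewise_spanner_def by blast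
        finally show "ereal_of_enat (dist V (del_edges (E' \<union> A) F) \<sigma> v) \<le> ereal_of_enat (dist V (del_edges E F) \<sigma> v) + ereal \<beta>" .
      qed
    qed
  next
    fix A assume A: "VFT_sourcewise_spanner V E A S f \<beta>"
    have AE: "A \<subseteq> E" using A by (simp add: VFT_sourcewise_spanner_def)
    show "VFT_spanner V E (E' \<union> A) f (\<beta> + 2)"
      unfolding VFT_spanner_def
    proof (intro conjI allI impI ballI)
      show "E' \<union> A \<subseteq> E" using AE E'E by auto
    next
      fix F s t assume F: "F \<subseteq> V \<and> card F \<le> f" and st: "s \<in> V - F" "t \<in> V - F"
        and fin: "dist (del_verts_V V F) (del_verts_E E F) s t \<noteq> \<infinity>"
      have finF: "finite F" using F finV finite_subset by auto
      have st': "s \<in> del_verts_V V F" "t \<in> del_verts_V V F" using st by (auto simp: del_verts_V_def)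
      show "ereal_of_enat (dist (del_verts_V V F) (del_verts_E (E' \<union> A) F) s t)
          \<le> ereal_of_enat (dist (del_verts_V V F) (del_verts_E E F) s t) + ereal (\<beta> + 2)"
      proof (rule main_abstract[where Src = "\<lambda>\<sigma>. \<sigma> \<in> S", OF _ _ st' fin assms(4)])
        fix x y assume xy: "{x, y} \<in> del_verts_E E F" "{x, y} \<notin> del_verts_E (E' \<union> A) F" "x \<in> del_verts_V V F"
        have "x \<notin> W" using xy notW by (auto simp: del_verts_E_def)
        then have "x \<in> S \<or> f + 1 \<le> card (Kset S Er x)" using I(4) xy(3) by (auto simp: del_verts_V_def)
        then show "\<exists>\<sigma>\<in>del_verts_V V F. \<sigma> \<in> S \<and> (\<sigma> = x \<or> {\<sigma>, x} \<in> del_verts_E (E' \<union> A) F \<and> {\<sigma>, x} \<in> del_verts_E E F)"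
        proof
          assume "x \<in> S" then show ?thesis using xy(3) by blast
        next
          assume "f + 1 \<le> card (Kset S Er x)"
          then obtain \<sigma> where "\<sigma> \<in> Kset S Er x" "\<sigma> \<notin> F" using pick_vert[OF finF] F by blast
          then show ?thesis using I(1,3) Eo xy(3) by (auto simp: Kset_def del_verts_E_def del_verts_V_def)
        qed
      next
        fix \<sigma> v assume "\<sigma> \<in> S" "\<sigma> \<in> del_verts_V V F" "v \<in> del_verts_V V F"
        have "dist (del_verts_V V F) (del_verts_E (E' \<union> A) F) \<sigma> v \<le> dist (del_verts_V V F) (del_verts_E A F) \<sigma> v"
          by (rule dist_mono) (auto simp: del_verts_E_def)
        then have "ereal_of_enat (dist (del_verts_V V F) (del_verts_E (E' \<union> A) F) \<sigma> v) \<le> ereal_of_enat (dist (del_verts_V V F) (del_verts_E A F) \<sigma> v)"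
          by simp
        also have "\<dots> \<le> ereal_of_enat (dist (del_verts_V V F) (del_verts_E E F) \<sigma> v) + ereal \<beta>"
          using A F \<open>\<sigma> \<in> S\<close> \<open>v \<in> del_verts_V V F\<close> unfolding VFT_sourcewise_spanner_def del_verts_V_def by blast
        finally show "ereal_of_enat (dist (del_verts_V V F) (del_verts_E (E' \<union> A) F) \<sigma> v) \<le> ereal_of_enat (dist (del_verts_V V F) (del_verts_E E F) \<sigma> v) + ereal \<beta>" .
      qed
    qed
  qed
qed


end
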